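(* Let $s\in[0,1]$, $1<p<\infty$, and let $f$ be locally integrable on $\mathbb R^N$. Then, with values in $[0,\infty]$, $$\|f_s^\#\|_{L^p(\mathbb R^N)}^p=\lim_{\lambda\to\infty}\lambda^p\mathcal L^{N+1}\Big(\Big\{(x,R)\in\mathbb R^N\times(0,\infty):\frac{f^\#_{1/R,s}(x)}{R^{1/p}}>\lambda\Big\}\Big)=\sup_{\lambda>0}\lambda^p\mathcal L^{N+1}\Big(\Big\{(x,R)\in\mathbb R^N\times(0,\infty):\frac{f^\#_{1/R,s}(x)}{R^{1/p}}>\lambda\Big\}\Big).$$
   Context: For $R>0$, $s\in[0,1]$: $f^\#_{R,s}(x)=\sup_{0<r<R}\frac{1}{r^{s+N}}\int_{B(x,r)}|f(y)-(f)_{B(x,r)}|\,dy$ and $f^\#_s(x)=\sup_{r>0}\frac{1}{r^{s+N}}\int_{B(x,r)}|f(y)-(f)_{B(x,r)}|\,dy$, where $(f)_B$ denotes the Lebesgue average of $f$ over the ball $B$. $\|f\|_{C^s_p(\mathbb R^N)}:=\|f^\#_s\|_{L^p(\mathbb R^N)}$. *)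

theory Defs
  imports "HOL-Analysis.Analysis"
begin

definition locally_integrable :: "('a::euclidean_space \<Rightarrow> real) \<Rightarrow> bool" where
  "locally_integrable f \<longleftrightarrow> (\<forall>K. compact K \<longrightarrow> set_integrable lebesgue K f)"

definition ball_avg :: "('a::euclidean_space \<Rightarrow> real) \<Rightarrow> 'a \<Rightarrow> real \<Rightarrow> real" where
  "ball_avg f x r = (LINT y:ball x r|lebesgue. f y) / measure lebesgue (ball x r)"

definition osc :: "real \<Rightarrow> ('a::euclidean_space \<Rightarrow> real) \<Rightarrow> 'a \<Rightarrow> real \<Rightarrow> ennreal" where
  "osc s f x r = ennreal (1 / r powr (s + real DIM('a))) *
     (\<integral>\<^sup>+ y. ennreal (\<bar>f y - ball_avg f x r\<bar>) * indicator (ball x r) y \<partial>lebesgue)"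

definition sharp_trunc :: "real \<Rightarrow> real \<Rightarrow> ('a::euclidean_space \<Rightarrow> real) \<Rightarrow> 'a \<Rightarrow> ennreal" where
  "sharp_trunc R s f x = (SUP r\<in>{0<..<R}. osc s f x r)"

definition sharp :: "real \<Rightarrow> ('a::euclidean_space \<Rightarrow> real) \<Rightarrow> 'a \<Rightarrow> ennreal" where
  "sharp s f x = (SUP r\<in>{0<..}. osc s f x r)"

definition enn_powr :: "ennreal \<Rightarrow> real \<Rightarrow> ennreal" where
  "enn_powr x p = (if x = \<infinity> then \<infinity> else ennreal (enn2real x powr p))"

definition level_quantity :: "real \<Rightarrow> real \<Rightarrow> ('a::euclidean_space \<Rightarrow> real) \<Rightarrow> real \<Rightarrow> ennreal" where
  "level_quantity s p f lam = ennreal (lam powr p) *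
     emeasure (lebesgue :: ('a \<times> real) measure)
       {(x, R). 0 < R \<and> sharp_trunc (1 / R) s f x * ennreal (R powr (- 1 / p)) > ennreal lam}"

end

theory Submission
  imports Defs
begin


lemma root_less_iff:
  fixes R d p :: real
  assumes R: "0 < R" and d: "0 \<le> d" and p: "0 < p"
  shows "R powr (1/p) < d \<longleftrightarrow> R < d powr p"
proof
  assume "R powr (1/p) < d"
  then have "(R powr (1/p)) powr p < d powr p" using p by (intro powr_less_mono2) auto
  also have "(R powr (1/p)) powr p = R" using p R by (simp add: powr_powr)
  finally show "R < d powr p" .
next
  assume h: "R < d powr p"
  then have "R powr (1/p) < (d powr p) powr (1/p)" using p R by (intro powr_less_mono2) auto
  also have "(d powr p) powr (1/p) = d" using p d by (simp add: powr_powr)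
  finally show "R powr (1/p) < d" .
qed

lemma key_ineq:
  fixes R lam p c :: real
  assumes R: "0 < R" and lam: "0 < lam" and p: "0 < p" and c: "0 \<le> c"
  shows "lam < c * R powr (-1/p) \<longleftrightarrow> R < (c/lam) powr p"
proof -
  have Rp: "0 < R powr (1/p)" using R by simp
  have "c * R powr (-1/p) = c / R powr (1/p)"
    by (simp add: powr_minus divide_inverse minus_divide_left)
  then have "lam < c * R powr (-1/p) \<longleftrightarrow> lam * R powr (1/p) < c"
    using Rp by (simp add: pos_less_divide_eq)
  also have "\<dots> \<longleftrightarrow> R powr (1/p) < c / lam"
    using lam by (simp add: pos_less_divide_eq mult.commute)
  also have "\<dots> \<longleftrightarrow> R < (c/lam) powr p"
    using lam c by (intro root_less_iff R p) auto
  finally show ?thesis .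
qed


lemma enn_powr_ennreal: "0 \<le> c \<Longrightarrow> enn_powr (ennreal c) p = ennreal (c powr p)"
  by (simp add: enn_powr_def)

lemma pw_upper:
  fixes os :: "real \<Rightarrow> ennreal" and p lam :: real
  assumes p: "1 < p" and lam: "0 < lam"
  shows "ennreal (lam powr p) * emeasure lborel {R. 0 < R \<and> (SUP r\<in>{0<..<1/R}. os r) * ennreal (R powr (-1/p)) > ennreal lam}
     \<le> enn_powr (SUP r\<in>{0<..}. os r) p"
proof (cases "(SUP r\<in>{0<..}. os r) = \<infinity>")
  case True then show ?thesis by (simp add: enn_powr_def)
next
  case False
  then obtain c where c: "(SUP r\<in>{0<..}. os r) = ennreal c" "0 \<le> c"
    by (cases "(SUP r\<in>{0<..}. os r)") auto
  have sub: "{R. 0 < R \<and> (SUP r\<in>{0<..<1/R}. os r) * ennreal (R powr (-1/p)) > ennreal lam} \<subseteq> {0<..<(c/lam) powr p}"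
  proof
    fix R :: real assume "R \<in> {R. 0 < R \<and> (SUP r\<in>{0<..<1/R}. os r) * ennreal (R powr (-1/p)) > ennreal lam}"
    then have R: "0 < R" and lt: "ennreal lam < (SUP r\<in>{0<..<1/R}. os r) * ennreal (R powr (-1/p))" by auto
    have "(SUP r\<in>{0<..<1/R}. os r) \<le> (SUP r\<in>{0<..}. os r)"
      by (rule SUP_subset_mono) auto
    then have "(SUP r\<in>{0<..<1/R}. os r) * ennreal (R powr (-1/p)) \<le> ennreal c * ennreal (R powr (-1/p))"
      using c by (intro mult_right_mono) auto
    also have "\<dots> = ennreal (c * R powr (-1/p))" using c by (simp add: ennreal_mult)
    finally have "ennreal lam < ennreal (c * R powr (-1/p))" using lt by simp
    then have "lam < c * R powr (-1/p)" using lam by (simp add: ennreal_less_iff)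
    then have "R < (c/lam) powr p" using key_ineq[OF R lam _ c(2), of p] p by simp
    then show "R \<in> {0<..<(c/lam) powr p}" using R by simp
  qed
  have "emeasure lborel {R. 0 < R \<and> (SUP r\<in>{0<..<1/R}. os r) * ennreal (R powr (-1/p)) > ennreal lam}
      \<le> emeasure lborel {0<..<(c/lam) powr p}"
    by (rule emeasure_mono[OF sub]) auto
  also have "\<dots> = ennreal ((c/lam) powr p)" by simp
  finally have "ennreal (lam powr p) * emeasure lborel {R. 0 < R \<and> (SUP r\<in>{0<..<1/R}. os r) * ennreal (R powr (-1/p)) > ennreal lam}
      \<le> ennreal (lam powr p) * ennreal ((c/lam) powr p)" by (rule mult_left_mono) simp
  also have "\<dots> = ennreal (lam powr p * (c/lam) powr p)" by (simp add: ennreal_mult)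
  also have "lam powr p * (c/lam) powr p = c powr p"
    using lam c by (simp add: powr_mult[symmetric])
  finally show ?thesis using c by (simp add: enn_powr_ennreal)
qed


lemma exists_M:
  fixes F :: ennreal and a0 p :: real
  assumes p: "1 < p" and a0: "0 \<le> a0" and lt: "ennreal a0 < enn_powr F p"
  shows "\<exists>M>0. ennreal M < F \<and> a0 < M powr p"
proof (cases "F = \<infinity>")
  case True
  define M where "M = (a0 + 1) powr (1/p)"
  have "M > 0" using a0 by (simp add: M_def)
  moreover have "M powr p = a0 + 1" using a0 p by (simp add: M_def powr_powr)
  ultimately show ?thesis using True by (intro exI[of _ M]) auto
next
  case False
  then obtain c where c: "F = ennreal c" "0 \<le> c" by (cases F) auto
  then have "a0 < c powr p" using lt a0 by (simp add: enn_powr_ennreal ennreal_less_iff)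
  define M where "M = ((a0 + c powr p)/2) powr (1/p)"
  have pos: "0 < (a0 + c powr p)/2" using a0 \<open>a0 < c powr p\<close> by simp
  have "M > 0" using pos by (simp add: M_def)
  moreover have Mp: "M powr p = (a0 + c powr p)/2" using pos p by (simp add: M_def powr_powr)
  moreover have "M < c"
  proof -
    have "M < (c powr p) powr (1/p)" unfolding M_def
      using pos p \<open>a0 < c powr p\<close> by (intro powr_less_mono2) auto
    also have "\<dots> = c" using c p by (simp add: powr_powr)
    finally show ?thesis .
  qed
  ultimately show ?thesis using c \<open>a0 < c powr p\<close> by (intro exI[of _ M]) (auto simp: ennreal_less_iff)
qed

lemma pw_tendsto:
  fixes os :: "real \<Rightarrow> ennreal" and p :: real
  assumes p: "1 < p"
  assumes meas: "\<And>lam. {R. 0 < R \<and> (SUP r\<in>{0<..<1/R}. os r) * ennreal (R powr (-1/p)) > ennreal lam} \<in> sets lborel"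
  shows "((\<lambda>lam. ennreal (lam powr p) * emeasure lborel {R. 0 < R \<and> (SUP r\<in>{0<..<1/R}. os r) * ennreal (R powr (-1/p)) > ennreal lam})
     \<longlongrightarrow> enn_powr (SUP r\<in>{0<..}. os r) p) at_top"
    (is "(?m \<longlongrightarrow> ?L) at_top")
proof (rule order_tendstoI)
  fix a assume aL': "?L < a"
  have "eventually (\<lambda>lam::real. 0 < lam) at_top" by (rule eventually_gt_at_top)
  then show "eventually (\<lambda>lam. ?m lam < a) at_top"
  proof eventually_elim
    fix lam :: real assume "0 < lam"
    show "?m lam < a" using pw_upper[OF p \<open>0 < lam\<close>] aL' by (rule le_less_trans)
  qed
next
  fix a assume aL: "a < ?L"
  then obtain a0 where a0: "a = ennreal a0" "0 \<le> a0" by (cases a) auto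
  then obtain M where M: "0 < M" "ennreal M < (SUP r\<in>{0<..}. os r)" "a0 < M powr p"
    using exists_M[OF p, of a0] aL by auto
  then obtain r where r: "0 < r" "ennreal M < os r" by (auto simp: less_SUP_iff)
  define R0 where "R0 = 1/(2*r)"
  have R0: "0 < R0" "R0 < 1/r" using r by (auto simp: R0_def field_simps)
  have "eventually (\<lambda>lam. max 0 (M * R0 powr (-1/p)) < lam) at_top" by (rule eventually_gt_at_top)
  then show "eventually (\<lambda>lam. a < ?m lam) at_top"
  proof eventually_elim
    fix lam assume "max 0 (M * R0 powr (-1/p)) < lam"
    then have lam: "0 < lam" and lamR: "M * R0 powr (-1/p) < lam" by auto
    have "\<not> R0 < (M/lam) powr p" using key_ineq[OF R0(1) lam _ less_imp_le[OF M(1)], of p] p lamR by auto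
    then have le: "(M/lam) powr p \<le> R0" by simp
    have sub: "{0<..<(M/lam) powr p} \<subseteq> {R. 0 < R \<and> (SUP r\<in>{0<..<1/R}. os r) * ennreal (R powr (-1/p)) > ennreal lam}"
    proof
      fix R assume "R \<in> {0<..<(M/lam) powr p}"
      then have R: "0 < R" "R < (M/lam) powr p" by auto
      have "R < R0" using R le by linarith
      then have a1: "R * r < R0 * r" using r by simp
      have a2: "R0 * r < 1" using R0(2) r by (simp add: field_simps)
      have "R * r < 1" using a1 a2 by linarith
      then have "r < 1/R" using R by (simp add: field_simps)
      then have "os r \<le> (SUP r\<in>{0<..<1/R}. os r)" using r by (intro SUP_upper) auto
      then have hM: "ennreal M \<le> (SUP r\<in>{0<..<1/R}. os r)" using r by simp
      have "lam < M * R powr (-1/p)" using key_ineq[OF R(1) lam _ less_imp_le[OF M(1)], of p] p R by auto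
      then have "ennreal lam < ennreal (M * R powr (-1/p))" using lam by (simp add: ennreal_less_iff)
      also have "\<dots> = ennreal M * ennreal (R powr (-1/p))" using M by (simp add: ennreal_mult)
      also have "\<dots> \<le> (SUP r\<in>{0<..<1/R}. os r) * ennreal (R powr (-1/p))"
        using hM by (rule mult_right_mono) simp
      finally show "R \<in> {R. 0 < R \<and> (SUP r\<in>{0<..<1/R}. os r) * ennreal (R powr (-1/p)) > ennreal lam}"
        using R by simp
    qed
    have "a < ennreal (M powr p)" using a0 M by (simp add: ennreal_less_iff)
    also have "M powr p = lam powr p * (M/lam) powr p"
      using lam M by (simp add: powr_mult[symmetric])
    also have "ennreal \<dots> = ennreal (lam powr p) * emeasure lborel {0<..<(M/lam) powr p}"
      by (simp add: ennreal_mult)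
    also have "\<dots> \<le> ?m lam"
      by (intro mult_left_mono emeasure_mono[OF sub meas]) simp
    finally show "a < ?m lam" .
  qed
qed


context
  fixes g :: "'a::euclidean_space \<Rightarrow> real"
  assumes gm[measurable]: "g \<in> borel_measurable lborel"
  assumes gi: "\<And>x r. set_integrable lborel (ball x r) g"
begin

lemma ball_avg_eq: assumes q: "0 \<le> q" shows "ball_avg g x q = (\<integral>y. indicator (ball x q) y * g y \<partial>lborel) / (unit_ball_vol (DIM('a)) * q ^ DIM('a))"
proof -
  have "(LINT y:ball x q|lebesgue. g y) = (\<integral>y. indicator (ball x q) y * g y \<partial>lborel)"
    unfolding set_lebesgue_integral_def
    by (subst integral_completion) (auto intro!: borel_measurable_times borel_measurable_indicator)
  moreover have "measure lebesgue (ball x q) = unit_ball_vol (DIM('a)) * q ^ DIM('a)"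
    using content_ball[where c=x and r=q] q by simp
  ultimately show ?thesis unfolding ball_avg_def by simp
qed

lemma meas_pair_ind[measurable]: "(\<lambda>z. indicator (ball (fst z) q) (snd z) :: 'b::{zero_neq_one,topological_space}) \<in> borel_measurable (lborel \<Otimes>\<^sub>M (lborel::'a measure))"
proof -
  have eq: "(\<lambda>z. indicator (ball (fst z) q) (snd z) :: 'b) = (\<lambda>z. if dist (fst z) (snd z) < q then 1 else 0)"
    by (auto simp: indicator_def fun_eq_iff)
  show ?thesis unfolding eq by measurable
qed

lemma meas_avg: assumes q: "0 \<le> q" shows "(\<lambda>x. ball_avg g x q) \<in> borel_measurable lborel"
proof -
  have "(\<lambda>(x,y). indicator (ball x q) y * g y) \<in> borel_measurable (lborel \<Otimes>\<^sub>M lborel)"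
    by (simp add: split_beta')
  then have "(\<lambda>x. \<integral>y. indicator (ball x q) y * g y \<partial>lborel) \<in> borel_measurable lborel"
    by (rule lborel.borel_measurable_lebesgue_integral)
  then show ?thesis unfolding ball_avg_eq[OF q] by simp
qed

lemma osc_eq: "osc s g x r = ennreal (1 / r powr (s + real DIM('a))) *
     (\<integral>\<^sup>+ y. ennreal (\<bar>g y - ball_avg g x r\<bar>) * indicator (ball x r) y \<partial>lborel)"
  unfolding osc_def by (simp add: nn_integral_completion)

lemma meas_osc: assumes q: "0 \<le> q" shows "(\<lambda>x. osc s g x q) \<in> borel_measurable lborel"
proof -
  note meas_avg[OF q, measurable]
  have "(\<lambda>(x,y). ennreal (\<bar>g y - ball_avg g x q\<bar>) * indicator (ball x q) y) \<in> borel_measurable (lborel \<Otimes>\<^sub>M lborel)"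
    by (simp add: split_beta')
  then have "(\<lambda>x. \<integral>\<^sup>+ y. ennreal (\<bar>g y - ball_avg g x q\<bar>) * indicator (ball x q) y \<partial>lborel) \<in> borel_measurable lborel"
    by (rule lborel.borel_measurable_nn_integral)
  then show ?thesis unfolding osc_eq by simp
qed


lemma gmb[measurable]: "g \<in> borel_measurable borel" using gm by simp

lemma gi': "integrable lborel (\<lambda>y. indicator (ball x r) y * g y)"
  using gi[of x r] unfolding set_integrable_def by simp

lemma ind_lim:
  fixes q :: "nat \<Rightarrow> real"
  assumes qlt: "\<And>n. q n < r" and ql: "q \<longlonglongrightarrow> r"
  shows "(\<lambda>n. indicator (ball x (q n)) y :: real) \<longlonglongrightarrow> indicator (ball x r) y"
proof (cases "dist x y < r")
  case True
  have "eventually (\<lambda>n. dist x y < q n) sequentially"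
    using ql True by (rule order_tendstoD)
  then have "eventually (\<lambda>n. indicator (ball x (q n)) y = (indicator (ball x r) y :: real)) sequentially"
    by eventually_elim (use True in \<open>simp add: indicator_def\<close>)
  then show ?thesis by (rule tendsto_eventually)
next
  case False
  then have "\<And>n. indicator (ball x (q n)) y = (indicator (ball x r) y :: real)"
    using qlt[of n] by (auto simp: indicator_def) (metis less_trans qlt)
  then show ?thesis by simp
qed

lemma int_conv:
  fixes q :: "nat \<Rightarrow> real"
  assumes qlt: "\<And>n. q n < r" and ql: "q \<longlonglongrightarrow> r"
  shows "(\<lambda>n. \<integral>y. indicator (ball x (q n)) y * g y \<partial>lborel) \<longlonglongrightarrow> (\<integral>y. indicator (ball x r) y * g y \<partial>lborel)"
proof (rule integral_dominated_convergence[where w="\<lambda>y. indicator (ball x r) y * \<bar>g y\<bar>"])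
  show "integrable lborel (\<lambda>y. indicator (ball x r) y * \<bar>g y\<bar>)"
    using integrable_abs[OF gi'[of x r]] by (simp add: abs_mult)
  show "AE y in lborel. (\<lambda>n. indicator (ball x (q n)) y * g y) \<longlonglongrightarrow> indicator (ball x r) y * g y"
    by (intro AE_I2 tendsto_mult ind_lim[OF qlt ql] tendsto_const)
  fix n
  show "AE y in lborel. norm (indicator (ball x (q n)) y * g y) \<le> indicator (ball x r) y * \<bar>g y\<bar>"
    using qlt[of n] by (intro AE_I2) (auto simp: indicator_def abs_mult)
qed (auto intro!: borel_measurable_times borel_measurable_indicator gmb)


lemma avg_conv:
  fixes q :: "nat \<Rightarrow> real"
  assumes r: "0 < r" and q0: "\<And>n. 0 \<le> q n" and qlt: "\<And>n. q n < r" and ql: "q \<longlonglongrightarrow> r"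
  shows "(\<lambda>n. ball_avg g x (q n)) \<longlonglongrightarrow> ball_avg g x r"
proof -
  have uv: "0 < unit_ball_vol (real DIM('a))" by simp
  have nz: "unit_ball_vol (real DIM('a)) * r ^ DIM('a) \<noteq> 0" using mult_pos_pos[OF uv zero_less_power[OF r, of "DIM('a)"]] by linarith
  have "(\<lambda>n. (\<integral>y. indicator (ball x (q n)) y * g y \<partial>lborel) / (unit_ball_vol (DIM('a)) * q n ^ DIM('a)))
     \<longlonglongrightarrow> (\<integral>y. indicator (ball x r) y * g y \<partial>lborel) / (unit_ball_vol (DIM('a)) * r ^ DIM('a))"
    by (intro tendsto_divide int_conv[OF qlt ql] tendsto_mult tendsto_const tendsto_power ql nz)
  then show ?thesis using r by (simp add: ball_avg_eq q0)
qed

lemma intJ: "integrable lborel (\<lambda>y. \<bar>g y - a\<bar> * indicator (ball x t) y)"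
proof -
  have i2: "integrable lborel (\<lambda>y. a * indicator (ball x t) y)"
    by (intro integrable_mult_right integrable_real_indicator emeasure_lborel_ball_finite) auto
  have "integrable lborel (\<lambda>y. \<bar>indicator (ball x t) y * g y - a * indicator (ball x t) y\<bar>)"
    by (rule integrable_abs[OF Bochner_Integration.integrable_diff[OF gi' i2]])
  also have "(\<lambda>y. \<bar>indicator (ball x t) y * g y - a * indicator (ball x t) y\<bar>) = (\<lambda>y. \<bar>g y - a\<bar> * indicator (ball x t) y)"
    by (auto simp: indicator_def fun_eq_iff)
  finally show ?thesis .
qed

lemma osc_real: "osc s g x t = ennreal (1 / t powr (s + real DIM('a)) * (\<integral>y. \<bar>g y - ball_avg g x t\<bar> * indicator (ball x t) y \<partial>lborel))"
proof -
  have e1: "(\<integral>\<^sup>+ y. ennreal (\<bar>g y - ball_avg g x t\<bar>) * indicator (ball x t) y \<partial>lborel)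
     = (\<integral>\<^sup>+ y. ennreal (\<bar>g y - ball_avg g x t\<bar> * indicator (ball x t) y) \<partial>lborel)"
    by (intro nn_integral_cong) (auto simp: indicator_def)
  have e2: "(\<integral>\<^sup>+ y. ennreal (\<bar>g y - ball_avg g x t\<bar> * indicator (ball x t) y) \<partial>lborel) = ennreal (\<integral>y. \<bar>g y - ball_avg g x t\<bar> * indicator (ball x t) y \<partial>lborel)"
    by (intro nn_integral_eq_integral intJ AE_I2) auto
  have nn: "0 \<le> (\<integral>y. \<bar>g y - ball_avg g x t\<bar> * indicator (ball x t) y \<partial>lborel)"
    by (intro integral_nonneg_AE AE_I2) auto
  show ?thesis unfolding osc_eq e1 e2
    by (rule ennreal_mult''[symmetric, OF nn])
qed

lemma J_conv:
  fixes q :: "nat \<Rightarrow> real"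
  assumes r: "0 < r" and q0: "\<And>n. 0 \<le> q n" and qlt: "\<And>n. q n < r" and ql: "q \<longlonglongrightarrow> r"
  shows "(\<lambda>n. \<integral>y. \<bar>g y - ball_avg g x (q n)\<bar> * indicator (ball x (q n)) y \<partial>lborel)
    \<longlonglongrightarrow> (\<integral>y. \<bar>g y - ball_avg g x r\<bar> * indicator (ball x r) y \<partial>lborel)"
proof -
  have ac: "(\<lambda>n. ball_avg g x (q n)) \<longlonglongrightarrow> ball_avg g x r" by (rule avg_conv[OF r q0 qlt ql])
  then have "Bseq (\<lambda>n. ball_avg g x (q n))" using convergent_imp_Bseq convergent_def by blast
  then obtain K where K: "\<And>n. \<bar>ball_avg g x (q n)\<bar> \<le> K" by (metis BseqE real_norm_def)
  show ?thesis
  proof (rule integral_dominated_convergence[where w="\<lambda>y. indicator (ball x r) y * \<bar>g y\<bar> + K * indicator (ball x r) y"])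
    show "integrable lborel (\<lambda>y. indicator (ball x r) y * \<bar>g y\<bar> + K * indicator (ball x r) y)"
    proof (rule Bochner_Integration.integrable_add)
      show "integrable lborel (\<lambda>y. indicator (ball x r) y * \<bar>g y\<bar>)"
        using integrable_abs[OF gi'[of x r]] by (simp add: abs_mult)
      show "integrable lborel (\<lambda>y. K * indicator (ball x r) y)"
        by (intro integrable_mult_right integrable_real_indicator emeasure_lborel_ball_finite) auto
    qed
    show "AE y in lborel. (\<lambda>n. \<bar>g y - ball_avg g x (q n)\<bar> * indicator (ball x (q n)) y) \<longlonglongrightarrow> \<bar>g y - ball_avg g x r\<bar> * indicator (ball x r) y"
      by (intro AE_I2 tendsto_mult ind_lim[OF qlt ql] tendsto_rabs tendsto_diff tendsto_const ac)
    fix n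
    have "\<bar>g y - ball_avg g x (q n)\<bar> * indicator (ball x (q n)) y \<le> indicator (ball x r) y * \<bar>g y\<bar> + K * indicator (ball x r) y" for y
    proof -
      have "\<bar>g y - ball_avg g x (q n)\<bar> \<le> \<bar>g y\<bar> + K" using K[of n] by linarith
      then show ?thesis using qlt[of n] by (auto simp: indicator_def)
    qed
    then show "AE y in lborel. norm (\<bar>g y - ball_avg g x (q n)\<bar> * indicator (ball x (q n)) y) \<le> indicator (ball x r) y * \<bar>g y\<bar> + K * indicator (ball x r) y"
      by (intro AE_I2) (simp add: abs_mult)
  next
    have m: "(\<lambda>y. \<bar>g y - c\<bar> * indicator (ball x t) y) \<in> borel_measurable lborel" for c t
      by (intro borel_measurable_times borel_measurable_abs borel_measurable_diff borel_measurable_indicator gm) auto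
    show "(\<lambda>y. \<bar>g y - ball_avg g x r\<bar> * indicator (ball x r) y) \<in> borel_measurable lborel" by (rule m)
    fix n show "(\<lambda>y. \<bar>g y - ball_avg g x (q n)\<bar> * indicator (ball x (q n)) y) \<in> borel_measurable lborel" by (rule m)
  qed
qed

lemma osc_lsc:
  assumes r: "0 < r"
  shows "osc s g x r \<le> (SUP t\<in>{t\<in>\<rat>. 0 < t \<and> t < r}. osc s g x t)"
proof -
  have "\<forall>n. \<exists>t. t \<in> \<rat> \<and> r - r / real (Suc n) < t \<and> t < r"
  proof
    fix n
    have "r - r / real (Suc n) < r" using r by simp
    then show "\<exists>t. t \<in> \<rat> \<and> r - r / real (Suc n) < t \<and> t < r" using Rats_dense_in_real by blast
  qed
  then obtain q where q: "\<And>n. q n \<in> \<rat>" "\<And>n. r - r / real (Suc n) < q n" "\<And>n. q n < r" by metis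
  have lo: "0 \<le> r - r / real (Suc n)" for n
    using r by (simp add: field_simps)
  have q0: "0 < q n" for n using lo[of n] q(2)[of n] by linarith
  have "(\<lambda>n. r - r * inverse (real (Suc n))) \<longlonglongrightarrow> r - r * 0"
    by (intro tendsto_diff tendsto_const tendsto_mult LIMSEQ_inverse_real_of_nat)
  then have low: "(\<lambda>n. r - r / real (Suc n)) \<longlonglongrightarrow> r" by (simp add: divide_inverse)
  have ql: "q \<longlonglongrightarrow> r"
  proof (rule tendsto_sandwich[OF _ _ low tendsto_const])
    show "eventually (\<lambda>n. r - r / real (Suc n) \<le> q n) sequentially"
      by (rule always_eventually) (meson q(2) less_imp_le)
    show "eventually (\<lambda>n. q n \<le> r) sequentially"
      by (rule always_eventually) (meson q(3) less_imp_le)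
  qed
  have "(\<lambda>n. ennreal (1 / q n powr (s + real DIM('a)) * (\<integral>y. \<bar>g y - ball_avg g x (q n)\<bar> * indicator (ball x (q n)) y \<partial>lborel)))
    \<longlonglongrightarrow> ennreal (1 / r powr (s + real DIM('a)) * (\<integral>y. \<bar>g y - ball_avg g x r\<bar> * indicator (ball x r) y \<partial>lborel))"
    using r by (intro tendsto_ennrealI tendsto_mult tendsto_divide tendsto_powr tendsto_const ql
        J_conv[OF r _ q(3) ql]) (auto intro: less_imp_le q0)
  then have conv: "(\<lambda>n. osc s g x (q n)) \<longlonglongrightarrow> osc s g x r" by (simp add: osc_real)
  show ?thesis
  proof (rule tendsto_upperbound[OF conv _ trivial_limit_sequentially])
    show "\<forall>\<^sub>F n in sequentially. osc s g x (q n) \<le> (SUP t\<in>{t\<in>\<rat>. 0 < t \<and> t < r}. osc s g x t)"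
      using q q0 by (intro always_eventually allI SUP_upper) auto
  qed
qed


lemma sup_if:
  fixes f :: "real \<Rightarrow> ennreal"
  shows "(SUP q\<in>{q\<in>A. P q}. f q) = (SUP q\<in>A. if P q then f q else 0)"
proof (rule antisym)
  show "(SUP q\<in>{q\<in>A. P q}. f q) \<le> (SUP q\<in>A. if P q then f q else 0)"
  proof (rule SUP_least)
    fix q assume "q \<in> {q\<in>A. P q}"
    then show "f q \<le> (SUP q\<in>A. if P q then f q else 0)"
      by (intro SUP_upper2[of q]) auto
  qed
  show "(SUP q\<in>A. if P q then f q else 0) \<le> (SUP q\<in>{q\<in>A. P q}. f q)"
  proof (rule SUP_least)
    fix q assume "q \<in> A"
    then show "(if P q then f q else 0) \<le> (SUP q\<in>{q\<in>A. P q}. f q)"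
      by (auto intro: SUP_upper)
  qed
qed

lemma trunc_rat: "(SUP r\<in>{0<..<a}. osc s g x r) = (SUP q\<in>{q\<in>\<rat>. 0 < q \<and> q < a}. osc s g x q)"
proof (rule antisym)
  show "(SUP r\<in>{0<..<a}. osc s g x r) \<le> (SUP q\<in>{q\<in>\<rat>. 0 < q \<and> q < a}. osc s g x q)"
  proof (rule SUP_least)
    fix r assume r: "r \<in> {0<..<a}"
    have "osc s g x r \<le> (SUP t\<in>{t\<in>\<rat>. 0 < t \<and> t < r}. osc s g x t)"
      using r by (intro osc_lsc) auto
    also have "\<dots> \<le> (SUP q\<in>{q\<in>\<rat>. 0 < q \<and> q < a}. osc s g x q)"
      using r by (intro SUP_subset_mono) auto
    finally show "osc s g x r \<le> (SUP q\<in>{q\<in>\<rat>. 0 < q \<and> q < a}. osc s g x q)" .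
  qed
  show "(SUP q\<in>{q\<in>\<rat>. 0 < q \<and> q < a}. osc s g x q) \<le> (SUP r\<in>{0<..<a}. osc s g x r)"
    by (intro SUP_subset_mono) auto
qed

lemma sharp_rat: "sharp s g x = (SUP q\<in>{q\<in>\<rat>. 0 < q}. osc s g x q)"
  unfolding sharp_def
proof (rule antisym)
  show "(SUP r\<in>{0<..}. osc s g x r) \<le> (SUP q\<in>{q\<in>\<rat>. 0 < q}. osc s g x q)"
  proof (rule SUP_least)
    fix r :: real assume r: "r \<in> {0<..}"
    have "osc s g x r \<le> (SUP t\<in>{t\<in>\<rat>. 0 < t \<and> t < r}. osc s g x t)"
      using r by (intro osc_lsc) auto
    also have "\<dots> \<le> (SUP q\<in>{q\<in>\<rat>. 0 < q}. osc s g x q)"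
      by (intro SUP_subset_mono) auto
    finally show "osc s g x r \<le> (SUP q\<in>{q\<in>\<rat>. 0 < q}. osc s g x q)" .
  qed
  show "(SUP q\<in>{q\<in>\<rat>. 0 < q}. osc s g x q) \<le> (SUP r\<in>{0<..}. osc s g x r)"
    by (intro SUP_subset_mono) auto
qed

lemma meas_G: "(\<lambda>z. SUP q\<in>{q\<in>\<rat>. 0 < q \<and> q < 1 / snd z}. osc s g (fst z) q) \<in> borel_measurable (lborel \<Otimes>\<^sub>M lborel)"
proof -
  have eq: "(\<lambda>z. SUP q\<in>{q\<in>\<rat>. 0 < q \<and> q < 1 / snd z}. osc s g (fst z) q)
    = (\<lambda>z. SUP q\<in>\<rat>. if 0 < q \<and> q < 1 / snd z then osc s g (fst z) q else 0)"
    by (rule ext) (rule sup_if)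
  show ?thesis unfolding eq
  proof (rule borel_measurable_SUP[OF countable_rat])
    fix q :: real assume "q \<in> \<rat>"
    show "(\<lambda>z. if 0 < q \<and> q < 1 / snd z then osc s g (fst z) q else 0) \<in> borel_measurable (lborel \<Otimes>\<^sub>M lborel)"
    proof (cases "0 < q")
      case True
      have [measurable]: "(\<lambda>z. osc s g (fst z) q) \<in> borel_measurable (lborel \<Otimes>\<^sub>M lborel)"
        using meas_osc[of q s] True by (intro measurable_compose[OF measurable_fst]) auto
      show ?thesis by measurable
    next
      case False then show ?thesis by simp
    qed
  qed
qed

lemma meas_F: "(\<lambda>x. sharp s g x) \<in> borel_measurable lborel"
proof -
  have eq: "(\<lambda>x. sharp s g x) = (\<lambda>x. SUP q\<in>\<rat>. if 0 < q then osc s g x q else 0)"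
    by (rule ext) (simp add: sharp_rat sup_if)
  show ?thesis unfolding eq
  proof (rule borel_measurable_SUP[OF countable_rat])
    fix q :: real assume "q \<in> \<rat>"
    show "(\<lambda>x. if 0 < q then osc s g x q else 0) \<in> borel_measurable lborel"
      using meas_osc[of q s] by (cases "0 < q") auto
  qed
qed

lemma meas_E: "{(x, R). 0 < R \<and> sharp_trunc (1 / R) s g x * ennreal (R powr (- 1 / p)) > ennreal lam} \<in> sets (lborel \<Otimes>\<^sub>M lborel)"
proof -
  have [measurable]: "(\<lambda>z. SUP q\<in>{q\<in>\<rat>. 0 < q \<and> q < 1 / snd z}. osc s g (fst z) q) \<in> borel_measurable (lborel \<Otimes>\<^sub>M lborel)"
    by (rule meas_G)
  have "{(x, R). 0 < R \<and> sharp_trunc (1 / R) s g x * ennreal (R powr (- 1 / p)) > ennreal lam}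
    = {z \<in> space (lborel \<Otimes>\<^sub>M lborel). 0 < snd z \<and> (SUP q\<in>{q\<in>\<rat>. 0 < q \<and> q < 1 / snd z}. osc s g (fst z) q) * ennreal (snd z powr (- 1 / p)) > ennreal lam}"
    by (auto simp: sharp_trunc_def trunc_rat space_pair_measure)
  also have "\<dots> \<in> sets (lborel \<Otimes>\<^sub>M lborel)" by measurable
  finally show ?thesis .
qed


lemma main_g:
  assumes p: "1 < p"
  shows "((level_quantity s p g) \<longlongrightarrow> (\<integral>\<^sup>+ x. enn_powr (sharp s g x) p \<partial>lebesgue)) at_top
    \<and> (\<integral>\<^sup>+ x. enn_powr (sharp s g x) p \<partial>lebesgue) = (SUP lam\<in>{0<..}. level_quantity s p g lam)"
proof -
  define E where "E lam = {(x, R). 0 < R \<and> sharp_trunc (1 / R) s g x * ennreal (R powr (- 1 / p)) > ennreal lam}" for lam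
  have Es: "E lam \<in> sets (lborel \<Otimes>\<^sub>M lborel)" for lam unfolding E_def by (rule meas_E)
  define m where "m x lam = ennreal (lam powr p) * emeasure lborel (Pair x -` E lam)" for x lam
  have slice: "Pair x -` E lam = {R. 0 < R \<and> (SUP r\<in>{0<..<1/R}. osc s g x r) * ennreal (R powr (-1/p)) > ennreal lam}" for x lam
    unfolding E_def sharp_trunc_def by auto
  have slice_meas: "{R. 0 < R \<and> (SUP r\<in>{0<..<1/R}. osc s g x r) * ennreal (R powr (-1/p)) > ennreal lam} \<in> sets lborel" for x lam
    using sets_Pair1[OF Es, of x] slice by simp
  have mm[measurable]: "(\<lambda>x. m x lam) \<in> borel_measurable lborel" for lam
  proof -
    have [measurable]: "(\<lambda>x. emeasure lborel (Pair x -` E lam)) \<in> borel_measurable lborel"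
      by (rule lborel.measurable_emeasure_Pair[OF Es])
    show ?thesis unfolding m_def by measurable
  qed
  have lq: "level_quantity s p g lam = (\<integral>\<^sup>+ x. m x lam \<partial>lborel)" for lam
  proof -
    have Es': "E lam \<in> sets (lborel :: ('a \<times> real) measure)" using Es[of lam] unfolding lborel_prod .
    have "level_quantity s p g lam = ennreal (lam powr p) * emeasure lebesgue (E lam)"
      by (simp add: level_quantity_def E_def)
    also have "emeasure (lebesgue :: ('a \<times> real) measure) (E lam) = emeasure lborel (E lam)"
      using Es' by simp
    also have "\<dots> = emeasure (lborel \<Otimes>\<^sub>M lborel) (E lam)" by (simp add: lborel_prod)
    also have "\<dots> = (\<integral>\<^sup>+ x. emeasure lborel (Pair x -` E lam) \<partial>lborel)"
      by (rule lborel.emeasure_pair_measure_alt[OF Es])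
    also have "ennreal (lam powr p) * \<dots> = (\<integral>\<^sup>+ x. m x lam \<partial>lborel)"
      unfolding m_def by (rule nn_integral_cmult[symmetric]) (rule lborel.measurable_emeasure_Pair[OF Es])
    finally show ?thesis .
  qed
  have pw: "((\<lambda>lam. m x lam) \<longlongrightarrow> enn_powr (sharp s g x) p) at_top" for x
    unfolding m_def slice sharp_def by (rule pw_tendsto[OF p slice_meas])
  have up: "m x lam \<le> enn_powr (sharp s g x) p" if "0 < lam" for x lam
    unfolding m_def slice sharp_def by (rule pw_upper[OF p that])
  define \<Psi> where "\<Psi> = (\<integral>\<^sup>+ x. enn_powr (sharp s g x) p \<partial>lborel)"
  have \<Psi>_eq: "(\<integral>\<^sup>+ x. enn_powr (sharp s g x) p \<partial>lebesgue) = \<Psi>" unfolding \<Psi>_def by (rule nn_integral_completion)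
  have \<Phi>up: "(\<integral>\<^sup>+ x. m x lam \<partial>lborel) \<le> \<Psi>" if "0 < lam" for lam
    unfolding \<Psi>_def by (intro nn_integral_mono up that)
  have tend: "((\<lambda>lam. \<integral>\<^sup>+ x. m x lam \<partial>lborel) \<longlongrightarrow> \<Psi>) at_top"
  proof (rule tendsto_at_topI_sequentially)
    fix X :: "nat \<Rightarrow> real" assume X: "filterlim X at_top sequentially"
    have "\<Psi> = (\<integral>\<^sup>+ x. liminf (\<lambda>n. m x (X n)) \<partial>lborel)"
      unfolding \<Psi>_def
      by (intro nn_integral_cong lim_imp_Liminf[symmetric] trivial_limit_sequentially filterlim_compose[OF pw X])
    also have "\<dots> \<le> liminf (\<lambda>n. \<integral>\<^sup>+ x. m x (X n) \<partial>lborel)"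
      by (rule nn_integral_liminf) (rule mm)
    finally have li: "\<Psi> \<le> liminf (\<lambda>n. \<integral>\<^sup>+ x. m x (X n) \<partial>lborel)" .
    have ev: "eventually (\<lambda>n. 0 < X n) sequentially" using X by (simp add: filterlim_at_top_dense)
    have "eventually (\<lambda>n. (\<integral>\<^sup>+ x. m x (X n) \<partial>lborel) \<le> \<Psi>) sequentially"
      using ev by eventually_elim (rule \<Phi>up)
    then have ls: "limsup (\<lambda>n. \<integral>\<^sup>+ x. m x (X n) \<partial>lborel) \<le> \<Psi>" by (rule Limsup_bounded)
    have "liminf (\<lambda>n. \<integral>\<^sup>+ x. m x (X n) \<partial>lborel) \<le> limsup (\<lambda>n. \<integral>\<^sup>+ x. m x (X n) \<partial>lborel)"
      by (rule Liminf_le_Limsup) simp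
    then have "liminf (\<lambda>n. \<integral>\<^sup>+ x. m x (X n) \<partial>lborel) = \<Psi>" "limsup (\<lambda>n. \<integral>\<^sup>+ x. m x (X n) \<partial>lborel) = \<Psi>"
      using li ls by auto
    then show "(\<lambda>n. \<integral>\<^sup>+ x. m x (X n) \<partial>lborel) \<longlonglongrightarrow> \<Psi>" by (intro Liminf_eq_Limsup) auto
  qed
  have lqf: "level_quantity s p g = (\<lambda>lam. \<integral>\<^sup>+ x. m x lam \<partial>lborel)" by (rule ext) (rule lq)
  have tend': "(level_quantity s p g \<longlongrightarrow> \<Psi>) at_top" using tend by (simp add: lqf)
  have sup: "\<Psi> = (SUP lam\<in>{0<..}. level_quantity s p g lam)"
  proof (rule antisym)
    have "eventually (\<lambda>lam::real. 0 < lam) at_top" by (rule eventually_gt_at_top)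
    then have "eventually (\<lambda>lam. level_quantity s p g lam \<le> (SUP lam\<in>{0<..}. level_quantity s p g lam)) at_top"
      by eventually_elim (auto intro: SUP_upper)
    then show "\<Psi> \<le> (SUP lam\<in>{0<..}. level_quantity s p g lam)"
      by (intro tendsto_upperbound[OF tend']) auto
    show "(SUP lam\<in>{0<..}. level_quantity s p g lam) \<le> \<Psi>"
      by (rule SUP_least) (auto simp: lq intro: \<Phi>up)
  qed
  show ?thesis using tend' sup \<Psi>_eq by simp
qed

end

lemma li_meas:
  assumes "locally_integrable (f :: 'a::euclidean_space \<Rightarrow> real)"
  shows "f \<in> borel_measurable lebesgue"
proof (rule borel_measurable_LIMSEQ_real[where u="\<lambda>n y. indicator (cball 0 (real n)) y * f y"])
  fix y :: 'a
  have "eventually (\<lambda>n. nat \<lceil>norm y\<rceil> \<le> n) sequentially" by (rule eventually_ge_at_top)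
  then have "eventually (\<lambda>n. indicator (cball 0 (real n)) y * f y = f y) sequentially"
  proof eventually_elim
    fix n assume "nat \<lceil>norm y\<rceil> \<le> n"
    have "norm y \<le> real (nat \<lceil>norm y\<rceil>)" by (rule real_nat_ceiling_ge)
    also have "\<dots> \<le> real n" by (rule of_nat_mono) fact
    finally have "norm y \<le> real n" .
    then have "y \<in> cball 0 (real n)" unfolding mem_cball_0 .
    then show "indicator (cball 0 (real n)) y * f y = f y" by simp
  qed
  then show "(\<lambda>n. indicator (cball 0 (real n)) y * f y) \<longlonglongrightarrow> f y" by (rule tendsto_eventually)
next
  fix n
  have "set_integrable lebesgue (cball 0 (real n)) f" using assms compact_cball unfolding locally_integrable_def by blast
  then have "integrable lebesgue (\<lambda>y. indicator (cball 0 (real n)) y * f y)"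
    unfolding set_integrable_def by simp
  then show "(\<lambda>y. indicator (cball 0 (real n)) y * f y) \<in> borel_measurable lebesgue"
    by (rule borel_measurable_integrable)
qed

theorem mainTheorem8:
  fixes f :: "'a::euclidean_space \<Rightarrow> real" and s p :: real
  assumes "0 \<le> s" "s \<le> 1" "1 < p" "locally_integrable f"
  shows "((level_quantity s p f) \<longlongrightarrow> (\<integral>\<^sup>+ x. enn_powr (sharp s f x) p \<partial>lebesgue)) at_top
    \<and> (\<integral>\<^sup>+ x. enn_powr (sharp s f x) p \<partial>lebesgue) = (SUP lam\<in>{0<..}. level_quantity s p f lam)"
proof -
  have fm: "f \<in> borel_measurable lebesgue" by (rule li_meas[OF assms(4)])
  obtain g where gm: "g \<in> borel_measurable lborel" and ae: "AE x in lborel. f x = g x"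
    using completion_ex_borel_measurable_real[OF fm] by blast
  have ae': "AE x in lebesgue. f x = g x" using ae by (rule AE_completion)
  have gml: "g \<in> borel_measurable lebesgue" using gm by (rule measurable_completion)
  have bs: "ball x r \<in> sets lebesgue" for x :: 'a and r by (intro sets_completionI_sets) simp
  have mf: "(\<lambda>y. indicator (ball x r) y *\<^sub>R f y) \<in> borel_measurable lebesgue" for x r
    by (intro borel_measurable_scaleR borel_measurable_indicator bs fm)
  have mg: "(\<lambda>y. indicator (ball x r) y *\<^sub>R g y) \<in> borel_measurable lebesgue" for x r
    by (intro borel_measurable_scaleR borel_measurable_indicator bs gml)
  have aeb: "AE y in lebesgue. indicator (ball x r) y *\<^sub>R f y = indicator (ball x r) y *\<^sub>R g y" for x r
    using ae' by eventually_elim simp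
  have avg: "ball_avg f x r = ball_avg g x r" for x r
  proof -
    have "(\<integral>y. indicator (ball x r) y *\<^sub>R f y \<partial>lebesgue) = (\<integral>y. indicator (ball x r) y *\<^sub>R g y \<partial>lebesgue)"
      by (rule integral_cong_AE[OF mf mg aeb])
    then show ?thesis unfolding ball_avg_def set_lebesgue_integral_def by simp
  qed
  have osc: "osc s f x r = osc s g x r" for x r
  proof -
    have "AE y in lebesgue. ennreal \<bar>f y - ball_avg g x r\<bar> * indicator (ball x r) y = ennreal \<bar>g y - ball_avg g x r\<bar> * indicator (ball x r) y"
      using ae' by eventually_elim simp
    then have "(\<integral>\<^sup>+ y. ennreal \<bar>f y - ball_avg g x r\<bar> * indicator (ball x r) y \<partial>lebesgue) = (\<integral>\<^sup>+ y. ennreal \<bar>g y - ball_avg g x r\<bar> * indicator (ball x r) y \<partial>lebesgue)"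
      by (rule nn_integral_cong_AE)
    then show ?thesis unfolding osc_def avg by simp
  qed
  have osc_fun: "osc s f = osc s g" by (intro ext osc)
  have gi: "set_integrable lborel (ball x r) g" for x r
  proof -
    have "set_integrable lebesgue (cball x r) f" using assms(4) compact_cball unfolding locally_integrable_def by blast
    then have "set_integrable lebesgue (ball x r) f" by (rule set_integrable_subset) (auto simp: bs)
    then have "integrable lebesgue (\<lambda>y. indicator (ball x r) y *\<^sub>R g y)"
      unfolding set_integrable_def using integrable_cong_AE[OF mf mg aeb] by simp
    moreover have "(\<lambda>y. indicator (ball x r) y *\<^sub>R g y) \<in> borel_measurable lborel"
      by (intro borel_measurable_scaleR borel_measurable_indicator gm) simp
    ultimately show ?thesis unfolding set_integrable_def using integrable_completion by blast
  qed
  have sharp_eq: "sharp s f = sharp s g" unfolding sharp_def osc_fun ..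
  have lq_eq: "level_quantity s p f = level_quantity s p g"
    unfolding level_quantity_def sharp_trunc_def osc_fun ..
  show ?thesis unfolding lq_eq sharp_eq by (rule main_g[OF gm gi assms(3)])
qed

end
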